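(* Let $T_1,\dots,T_n$ be non-negative, possibly dependent, random variables (component lifetimes) such that the series-system lifetimes below are absolutely continuous. Let $T_D^S$ have survival function $\overline F_D^S(t)=P(T_1>t,\dots,T_n>t)$ and $T_I^S$ have survival function $\overline F_I^S(t)=\prod_{i=1}^n P(T_i>t)$, with failure rates $r_D^S(t)=f_D^S(t)/\overline F_D^S(t)$ and $r_I^S(t)=f_I^S(t)/\overline F_I^S(t)$ (where $f$ denotes the corresponding density), and $r_I^S(t)>0$. Define the relative errors $$E_S^{r}(t)=\frac{r_D^S(t)-r_I^S(t)}{r_I^S(t)},\qquad E_S^{\overline F}(t)=\frac{\overline F_D^S(t)-\overline F_I^S(t)}{\overline F_I^S(t)}.$$ Let $t_0>0$. If $E_S^r(t)\le 0$ (resp. $\ge 0$) for all $t\le t_0$, then $E_S^{\overline F}(t)\ge 0$ (resp. $\le 0$) for $t\le t_0$.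
   Context: $T_D^S$ is the lifetime of the series system with the actual (dependent) components and $T_I^S$ the lifetime of the same series system under the assumption that the components are independent with the same marginals; times $t$ range over $[0,\infty)$. *)

theory Defs
  imports "HOL-Probability.Probability"
begin

definition surv_D :: "'a measure \<Rightarrow> (nat \<Rightarrow> 'a \<Rightarrow> real) \<Rightarrow> nat \<Rightarrow> real \<Rightarrow> real" where
  "surv_D M T n t = measure M {\<omega> \<in> space M. \<forall>i<n. T i \<omega> > t}"

definition surv_I :: "'a measure \<Rightarrow> (nat \<Rightarrow> 'a \<Rightarrow> real) \<Rightarrow> nat \<Rightarrow> real \<Rightarrow> real" where
  "surv_I M T n t = (\<Prod>i<n. measure M {\<omega> \<in> space M. T i \<omega> > t})"

definition failure_rate :: "(real \<Rightarrow> real) \<Rightarrow> (real \<Rightarrow> real) \<Rightarrow> real \<Rightarrow> real" where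
  "failure_rate f Fbar t = f t / Fbar t"

definition rel_error :: "(real \<Rightarrow> real) \<Rightarrow> (real \<Rightarrow> real) \<Rightarrow> real \<Rightarrow> real" where
  "rel_error gD gI t = (gD t - gI t) / gI t"

definition is_density_of_surv :: "(real \<Rightarrow> real) \<Rightarrow> (real \<Rightarrow> real) \<Rightarrow> bool" where
  "is_density_of_surv f Fbar \<longleftrightarrow> f \<in> borel_measurable lborel \<and> (\<forall>x. f x \<ge> 0) \<and>
     (\<forall>t. set_integrable lborel {t<..} f \<and> Fbar t = (LINT x:{t<..}|lborel. f x))"

end

theory Submission
  imports Defs
begin

lemma dens_nonneg:
  assumes "is_density_of_surv f F" shows "F t \<ge> 0"
  using assms unfolding is_density_of_surv_def set_lebesgue_integral_def
  by (auto intro!: integral_nonneg_AE simp: indicator_def)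

lemma dens_diff:
  assumes "is_density_of_surv f F" "a < b"
  shows "set_integrable lborel {a<..b} f" "F a - F b = (LINT x:{a<..b}|lborel. f x)"
proof -
  have i: "set_integrable lborel {a<..} f" "set_integrable lborel {b<..} f"
    and e: "F a = (LINT x:{a<..}|lborel. f x)" "F b = (LINT x:{b<..}|lborel. f x)"
    using assms unfolding is_density_of_surv_def by auto
  show i2: "set_integrable lborel {a<..b} f"
    by (rule set_integrable_subset[OF i(1)]) auto
  have U: "{a<..} = {a<..b} \<union> {b<..}" using assms(2) by auto
  have disj: "{a<..b} \<inter> {b<..} = {}" by auto
  have "(LINT x:{a<..}|lborel. f x) = (LINT x:{a<..b}|lborel. f x) + (LINT x:{b<..}|lborel. f x)"
    by (subst U) (rule set_integral_Un[OF disj i2 i(2)])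
  then show "F a - F b = (LINT x:{a<..b}|lborel. f x)" using e by simp
qed

lemma dens_mono:
  assumes "is_density_of_surv f F" "a \<le> b" shows "F b \<le> F a"
proof (cases "a = b")
  case False
  then have "a < b" using assms by auto
  have "0 \<le> (LINT x:{a<..b}|lborel. f x)"
    using assms unfolding is_density_of_surv_def set_lebesgue_integral_def
    by (auto intro!: integral_nonneg_AE simp: indicator_def)
  then show ?thesis using dens_diff(2)[OF assms(1) \<open>a < b\<close>] by simp
qed simp

lemma dens_cont:
  assumes "is_density_of_surv f F" shows "isCont F x"
proof -
  define a where "a = x - 1"
  have fm: "f \<in> borel_measurable lborel" using assms unfolding is_density_of_surv_def by auto
  have ia: "set_integrable lborel {a-1<..} f" using assms unfolding is_density_of_surv_def by auto
  have ii: "set_integrable lborel {a..b} f" if "a \<le> b" for b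
    by (rule set_integrable_subset[OF ia]) auto
  have c: "continuous_on UNIV (\<lambda>b. LBINT y:{a..b}. f y)"
    by (rule continuous_on_LBINT) (rule ii)
  have eq: "F t = F a - (LBINT y:{a..t}. f y)" if "t \<in> {a<..}" for t
  proof -
    have "(LBINT y:{a..t}. f y) = (LBINT y:{a<..t}. f y)"
    proof (rule set_integral_cong_set)
      show "set_borel_measurable lborel {a..t} f" "set_borel_measurable lborel {a<..t} f"
        using fm unfolding set_borel_measurable_def by (auto intro!: borel_measurable_scaleR borel_measurable_indicator)
      show "AE x in lborel. (x \<in> {a<..t}) = (x \<in> {a..t})"
        using AE_lborel_singleton[of a] by eventually_elim auto
    qed
    then show ?thesis using dens_diff(2)[OF assms, of a t] that by simp
  qed
  have "continuous_on {a<..} (\<lambda>t. F a - (LBINT y:{a..t}. f y))"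
    by (intro continuous_intros continuous_on_subset[OF c]) auto
  then have "continuous_on {a<..} F"
    using continuous_on_cong[OF refl eq, of "{a<..}"] by simp
  then show ?thesis
    by (rule continuous_on_interior[of "{a<..}"]) (auto simp: a_def interior_open)
qed

lemma crossing:
  fixes w :: "real \<Rightarrow> real"
  assumes "continuous_on {a..b} w" "a \<le> b" "w a \<ge> 0" "w b < 0"
  shows "\<exists>q. a \<le> q \<and> q < b \<and> w q \<ge> 0 \<and> (\<forall>r. q < r \<and> r \<le> b \<longrightarrow> w r < 0)"
proof -
  define S where "S = {x \<in> {a..b}. (\<lambda>_. 0) x \<le> w x}"
  have cl: "closed S" unfolding S_def
    by (rule continuous_on_closed_Collect_le) (use assms in \<open>auto intro: continuous_intros\<close>)
  have ne: "S \<noteq> {}" using assms unfolding S_def by auto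
  have bd: "bdd_above S" unfolding S_def by (auto intro: bdd_aboveI[of _ b])
  have qS: "Sup S \<in> S" by (rule closed_contains_Sup[OF ne bd cl])
  have ub: "x \<le> Sup S" if "x \<in> S" for x using cSup_upper[OF that bd] .
  show ?thesis
  proof (intro exI conjI allI impI)
    show "a \<le> Sup S" using ub assms unfolding S_def by auto
    show "0 \<le> w (Sup S)" using qS unfolding S_def by auto
    have "Sup S \<le> b" using qS unfolding S_def by auto
    moreover have "Sup S \<noteq> b" using qS assms unfolding S_def by auto
    ultimately show "Sup S < b" by simp
    fix r assume r: "Sup S < r \<and> r \<le> b"
    then have "r \<notin> S" using ub by force
    moreover have "a \<le> r" using r \<open>a \<le> Sup S\<close> by auto
    ultimately show "w r < 0" using r unfolding S_def by auto
  qed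
qed

lemma divsign:
  fixes b x :: real
  assumes "b > 0" shows "(x / b \<le> 0 \<longleftrightarrow> x \<le> 0) \<and> (x / b \<ge> 0 \<longleftrightarrow> x \<ge> 0)"
  using assms by (simp add: divide_le_0_iff zero_le_divide_iff)

theorem mainTheorem3:
  fixes M :: "'a measure" and T :: "nat \<Rightarrow> 'a \<Rightarrow> real" and n :: nat
    and fD fI :: "real \<Rightarrow> real" and t0 :: real
  assumes "prob_space M"
    and "\<And>i. i < n \<Longrightarrow> T i \<in> borel_measurable M"
    and "\<And>i \<omega>. i < n \<Longrightarrow> \<omega> \<in> space M \<Longrightarrow> T i \<omega> \<ge> 0"
    and "is_density_of_surv fD (surv_D M T n)"
    and "is_density_of_surv fI (surv_I M T n)"
    and "\<And>t. t \<ge> 0 \<Longrightarrow> failure_rate fI (surv_I M T n) t > 0"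
    and "t0 > 0"
  shows "((\<forall>t\<in>{0..t0}. rel_error (failure_rate fD (surv_D M T n)) (failure_rate fI (surv_I M T n)) t \<le> 0)
            \<longrightarrow> (\<forall>t\<in>{0..t0}. rel_error (surv_D M T n) (surv_I M T n) t \<ge> 0))
       \<and> ((\<forall>t\<in>{0..t0}. rel_error (failure_rate fD (surv_D M T n)) (failure_rate fI (surv_I M T n)) t \<ge> 0)
            \<longrightarrow> (\<forall>t\<in>{0..t0}. rel_error (surv_D M T n) (surv_I M T n) t \<le> 0))"
proof -
  define u where "u = surv_D M T n"
  define v where "v = surv_I M T n"
  have dD: "is_density_of_surv fD u" and dI: "is_density_of_surv fI v"
    using assms(4,5) unfolding u_def v_def by auto
  have fDnn: "fD x \<ge> 0" and fInn: "fI x \<ge> 0" for x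
    using dD dI unfolding is_density_of_surv_def by auto
  have cu: "isCont u x" and cv: "isCont v x" for x using dens_cont dD dI by auto
  have u0: "u t = 1" and v0: "v t = 1" if "t < 0" for t
  proof -
    have "{\<omega> \<in> space M. T i \<omega> > t} = space M" if "i < n" for i
      using assms(3)[OF that] \<open>t < 0\<close> by force
    then show "v t = 1" unfolding v_def surv_I_def
      using prob_space.prob_space[OF assms(1)] by simp
    have "{\<omega> \<in> space M. \<forall>i<n. T i \<omega> > t} = space M"
      using assms(3) \<open>t < 0\<close> by force
    then show "u t = 1" unfolding u_def surv_D_def
      using prob_space.prob_space[OF assms(1)] by simp
  qed
  have lim0: "g 0 = 1" if "isCont g 0" "\<And>t. t < 0 \<Longrightarrow> g t = 1" for g :: "real \<Rightarrow> real"
  proof -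
    have "(g \<longlongrightarrow> g 0) (at_left 0)"
      using that(1) by (simp add: isCont_def filterlim_at_split)
    moreover have "(g \<longlongrightarrow> 1) (at_left 0)"
      by (rule tendsto_eventually) (rule eventually_mono[OF eventually_at_left_real[of "-1" "0::real"]], auto simp: that(2))
    ultimately show ?thesis by (rule tendsto_unique[rotated]) simp
  qed
  have u00: "u 0 = 1" using lim0[OF cu u0] .
  have v00: "v 0 = 1" using lim0[OF cv v0] .
  have unn: "u t \<ge> 0" for t using dens_nonneg[OF dD] .
  have vpos: "v t > 0" if "t \<ge> 0" for t
  proof -
    have "fI t / v t > 0" using assms(6)[OF that] unfolding v_def failure_rate_def by simp
    moreover have "v t \<ge> 0" using dens_nonneg[OF dI] .
    ultimately show ?thesis by (cases "v t = 0") auto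
  qed
  have rI: "fD t / u t - fI t / v t \<le> 0 \<longleftrightarrow> rel_error (failure_rate fD u) (failure_rate fI v) t \<le> 0"
    "fD t / u t - fI t / v t \<ge> 0 \<longleftrightarrow> rel_error (failure_rate fD u) (failure_rate fI v) t \<ge> 0"
    if "t \<ge> 0" for t
  proof -
    have p: "fI t / v t > 0" using assms(6)[OF that] unfolding v_def failure_rate_def by simp
    have e: "rel_error (failure_rate fD u) (failure_rate fI v) t = (fD t / u t - fI t / v t) / (fI t / v t)"
      by (simp add: rel_error_def failure_rate_def)
    show "fD t / u t - fI t / v t \<le> 0 \<longleftrightarrow> rel_error (failure_rate fD u) (failure_rate fI v) t \<le> 0"
      "fD t / u t - fI t / v t \<ge> 0 \<longleftrightarrow> rel_error (failure_rate fD u) (failure_rate fI v) t \<ge> 0"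
      unfolding e using divsign[OF p, of "fD t / u t - fI t / v t"] by blast+
  qed
  have rS: "u t - v t \<ge> 0 \<longleftrightarrow> rel_error u v t \<ge> 0" "u t - v t \<le> 0 \<longleftrightarrow> rel_error u v t \<le> 0"
    if "t \<ge> 0" for t
    unfolding rel_error_def using divsign[OF vpos[OF that], of "u t - v t"] by blast+
  have cont: "continuous_on {a..b} (\<lambda>x. u x - v x)" "continuous_on {a..b} (\<lambda>x. v x - u x)" for a b
    using cu cv by (auto intro!: continuous_at_imp_continuous_on continuous_intros)
  have part1: "u t \<ge> v t"
    if H: "\<forall>t\<in>{0..t0}. fD t / u t - fI t / v t \<le> 0" and t: "t \<in> {0..t0}" for t
  proof (rule ccontr)
    assume "\<not> u t \<ge> v t"
    then have "u t - v t < 0" by simp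
    from crossing[OF cont(1), of 0 t, OF _ _ this] t u00 v00
    obtain q where q: "0 \<le> q" "q < t" "u q - v q \<ge> 0" "\<And>r. q < r \<Longrightarrow> r \<le> t \<Longrightarrow> u r - v r < 0"
      by auto
    have z: "u r = 0" if r: "q < r" "r \<le> t" for r
    proof (rule ccontr)
      assume "u r \<noteq> 0"
      then have ur: "u r > 0" using unn[of r] by simp
      have le: "fD s \<le> fI s" if s: "s \<in> {q<..r}" for s
      proof -
        have "u s \<ge> u r" using dens_mono[OF dD] s by auto
        then have us: "u s > 0" using ur by simp
        have vs: "v s > 0" using vpos s q by auto
        have uv: "u s < v s" using q(4)[of s] s r by auto
        have "fD s / u s \<le> fI s / v s" using H s q r t by auto
        then have "fD s \<le> fI s / v s * u s" using us by (simp add: divide_le_eq)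
        also have "\<dots> \<le> fI s / v s * v s" using uv fInn[of s] vs
          by (intro mult_left_mono) auto
        also have "\<dots> = fI s" using vs by simp
        finally show ?thesis .
      qed
      have "(LINT x:{q<..r}|lborel. fD x) \<le> (LINT x:{q<..r}|lborel. fI x)"
        using set_integral_mono[OF dens_diff(1)[OF dD r(1)] dens_diff(1)[OF dI r(1)] le] .
      then have "u q - u r \<le> v q - v r" using dens_diff(2)[OF dD r(1)] dens_diff(2)[OF dI r(1)] by simp
      then show False using q(3) q(4)[OF r] by simp
    qed
    have "(u \<longlongrightarrow> u q) (at_right q)"
      using cu[of q] by (simp add: isCont_def filterlim_at_split)
    moreover have "(u \<longlongrightarrow> 0) (at_right q)"
      by (rule tendsto_eventually) (rule eventually_mono[OF eventually_at_right_real[OF q(2)]], auto simp: z)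
    ultimately have "u q = 0" by (rule tendsto_unique[rotated]) simp
    then show False using q(3) vpos[OF q(1)] by simp
  qed
  have part2: "u t \<le> v t"
    if H: "\<forall>t\<in>{0..t0}. fD t / u t - fI t / v t \<ge> 0" and t: "t \<in> {0..t0}" for t
  proof (rule ccontr)
    assume "\<not> u t \<le> v t"
    then have "v t - u t < 0" by simp
    from crossing[OF cont(2), of 0 t, OF _ _ this] t u00 v00
    obtain q where q: "0 \<le> q" "q < t" "v q - u q \<ge> 0" "\<And>r. q < r \<Longrightarrow> r \<le> t \<Longrightarrow> v r - u r < 0"
      by auto
    have le: "fI s \<le> fD s" if s: "s \<in> {q<..t}" for s
    proof -
      have vs: "v s > 0" using vpos s q by auto
      have uv: "v s < u s" using q(4)[of s] s by auto
      then have us: "u s > 0" using vs by simp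
      have "fI s / v s \<le> fD s / u s" using H s q t by auto
      then have "fI s / v s * u s \<le> fD s" using us by (simp add: le_divide_eq)
      moreover have "fI s / v s * v s \<le> fI s / v s * u s" using uv fInn[of s] vs
        by (intro mult_left_mono) auto
      moreover have "fI s / v s * v s = fI s" using vs by simp
      ultimately show ?thesis by linarith
    qed
    have "(LINT x:{q<..t}|lborel. fI x) \<le> (LINT x:{q<..t}|lborel. fD x)"
      using set_integral_mono[OF dens_diff(1)[OF dI q(2)] dens_diff(1)[OF dD q(2)] le] .
    then have "v q - v t \<le> u q - u t" using dens_diff(2)[OF dD q(2)] dens_diff(2)[OF dI q(2)] by simp
    then show False using q(3) q(4)[OF q(2) order_refl] by simp
  qed
  show ?thesis
    unfolding u_def[symmetric] v_def[symmetric]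
  proof (intro conjI impI ballI)
    fix t assume H: "\<forall>t\<in>{0..t0}. rel_error (failure_rate fD u) (failure_rate fI v) t \<le> 0" and t: "t \<in> {0..t0}"
    have "\<forall>t\<in>{0..t0}. fD t / u t - fI t / v t \<le> 0" using H rI(1) by auto
    then show "rel_error u v t \<ge> 0" using part1 t rS(1)[of t] by auto
  next
    fix t assume H: "\<forall>t\<in>{0..t0}. rel_error (failure_rate fD u) (failure_rate fI v) t \<ge> 0" and t: "t \<in> {0..t0}"
    have "\<forall>t\<in>{0..t0}. fD t / u t - fI t / v t \<ge> 0" using H rI(2) by auto
    then show "rel_error u v t \<le> 0" using part2 t rS(2)[of t] by auto
  qed
qed

end
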